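(* Let $\langle Y,\tau\rangle$ be a Hausdorff space with a Sorgenfrey base. Then there exists a continuous open surjection $f:\langle{}^\omega\omega,\sigma_{\mathbb S}\rangle\to\langle Y,\tau\rangle$. Moreover, if $\langle Y,\tau\rangle$ has a Sorgenfrey base that is locally strict and has strict branches, then $\langle Y,\tau\rangle$ is homeomorphic to $\langle{}^\omega\omega,\sigma_{\mathbb S}\rangle$.
   Context: Notation: ${}^{<\omega}\omega$, ${}^\omega\omega$ finite/infinite sequences of naturals; $a^\frown k$ extends $a$ by $k$; $a\triangleleft b$ iff there is $n$ in both domains with $a\upharpoonright n=b\upharpoonright n$ and $a(n)<b(n)$. $\sigma_{\mathbb S}$ is the topology on ${}^\omega\omega$ with base $\{B(p,m):p\in{}^\omega\omega,m\in\omega\}$, $B(p,m)=\{p\}\cup\{r: r\upharpoonright m=p\upharpoonright m,\ p\triangleleft r\}$. A Souslin scheme on $X$ is a family $\mathbf V=\langle V_a\rangle_{a\in{}^{<\omega}\omega}$ of subsets of $X$; $\mathrm{fruit}(\mathbf V,p)=\bigcap_nV_{p\upharpoonright n}$; covering: $V_{\langle\rangle}=X$ and $V_a=\bigcup_nV_{a^\frown n}$; complete: all fruits nonempty; open: all $V_a$ open; has strict branches: every fruit is a singleton; locally strict: $V_a=\bigcup_nV_{a^\frown n}$ and $V_{a^\frown m}\cap V_{a^\frown k}=\emptyset$ for all $a$ and $m\ne k$. $\mathrm{branches}(\mathbf V,x)=\{q: x\in\mathrm{fruit}(\mathbf V,q)\}$; $\mathrm{rsequences}(q,n)=\{p:q\triangleleft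 p,\ q\upharpoonright n=p\upharpoonright n\}$; $\mathrm{cut}(\mathbf V,q,n)=\bigcup\{\mathrm{fruit}(\mathbf V,p):p\in\mathrm{rsequences}(q,n)\}$. A branch $q$ of $x$ is a $\tau$-base branch of $x$ if $\{\mathrm{cut}(\mathbf V,q,m)\cup\{x\}:m\in\omega\}$ is an open neighborhood base at $x$; $\mathrm{BB}(\mathbf V,x,\tau)$ is the set of these. A Sorgenfrey base for a Hausdorff $\langle X,\tau\rangle$ is an open complete covering Souslin scheme with (S1) for all $x$, $q\in\mathrm{branches}(\mathbf V,x)$, $n$, some $t\in\mathrm{BB}(\mathbf V,x,\tau)$ has $t\upharpoonright n=q\upharpoonright n$; (S2) every $q\in{}^\omega\omega$ lies in $\mathrm{BB}(\mathbf V,z,\tau)$ for some $z$. *)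

theory Defs
  imports "HOL-Analysis.Analysis"
begin

definition restr :: "(nat \<Rightarrow> nat) \<Rightarrow> nat \<Rightarrow> nat list" where
  "restr p n = map p [0..<n]"

definition seq_less :: "(nat \<Rightarrow> nat) \<Rightarrow> (nat \<Rightarrow> nat) \<Rightarrow> bool" where
  "seq_less a b \<longleftrightarrow> (\<exists>n. (\<forall>i<n. a i = b i) \<and> a n < b n)"

definition SBall :: "(nat \<Rightarrow> nat) \<Rightarrow> nat \<Rightarrow> (nat \<Rightarrow> nat) set" where
  "SBall p m = {p} \<union> {r. (\<forall>i<m. r i = p i) \<and> seq_less p r}"

definition sigmaS :: "(nat \<Rightarrow> nat) topology" where
  "sigmaS = topology_generated_by (range (\<lambda>(p, m). SBall p m))"

type_synonym 'a souslin = "nat list \<Rightarrow> 'a set"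

definition souslin_scheme :: "'a topology \<Rightarrow> 'a souslin \<Rightarrow> bool" where
  "souslin_scheme X V \<longleftrightarrow> (\<forall>a. V a \<subseteq> topspace X)"

definition fruit :: "'a souslin \<Rightarrow> (nat \<Rightarrow> nat) \<Rightarrow> 'a set" where
  "fruit V p = (\<Inter>n. V (restr p n))"

definition covering :: "'a topology \<Rightarrow> 'a souslin \<Rightarrow> bool" where
  "covering X V \<longleftrightarrow> V [] = topspace X \<and> (\<forall>a. V a = (\<Union>n. V (a @ [n])))"

definition complete_scheme :: "'a souslin \<Rightarrow> bool" where
  "complete_scheme V \<longleftrightarrow> (\<forall>p. fruit V p \<noteq> {})"

definition open_scheme :: "'a topology \<Rightarrow> 'a souslin \<Rightarrow> bool" where
  "open_scheme X V \<longleftrightarrow> (\<forall>a. openin X (V a))"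

definition strict_branches :: "'a souslin \<Rightarrow> bool" where
  "strict_branches V \<longleftrightarrow> (\<forall>p. \<exists>x. fruit V p = {x})"

definition locally_strict :: "'a souslin \<Rightarrow> bool" where
  "locally_strict V \<longleftrightarrow> (\<forall>a. V a = (\<Union>n. V (a @ [n])) \<and>
      (\<forall>m k. m \<noteq> k \<longrightarrow> V (a @ [m]) \<inter> V (a @ [k]) = {}))"

definition branches :: "'a souslin \<Rightarrow> 'a \<Rightarrow> (nat \<Rightarrow> nat) set" where
  "branches V x = {q. x \<in> fruit V q}"

definition rsequences :: "(nat \<Rightarrow> nat) \<Rightarrow> nat \<Rightarrow> (nat \<Rightarrow> nat) set" where
  "rsequences q n = {p. seq_less q p \<and> restr q n = restr p n}"

definition cut :: "'a souslin \<Rightarrow> (nat \<Rightarrow> nat) \<Rightarrow> nat \<Rightarrow> 'a set" where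
  "cut V q n = \<Union> {fruit V p | p. p \<in> rsequences q n}"

definition base_branches :: "'a souslin \<Rightarrow> 'a \<Rightarrow> 'a topology \<Rightarrow> (nat \<Rightarrow> nat) set" where
  "base_branches V x T = {q. q \<in> branches V x \<and>
      (\<forall>m. openin T (cut V q m \<union> {x})) \<and>
      (\<forall>U. openin T U \<and> x \<in> U \<longrightarrow> (\<exists>m. cut V q m \<union> {x} \<subseteq> U))}"

definition sorgenfrey_base :: "'a topology \<Rightarrow> 'a souslin \<Rightarrow> bool" where
  "sorgenfrey_base T V \<longleftrightarrow> souslin_scheme T V \<and> open_scheme T V \<and> complete_scheme V \<and>
     covering T V \<and>
     (\<forall>x\<in>topspace T. \<forall>q\<in>branches V x. \<forall>n. \<exists>t\<in>base_branches V x T. restr t n = restr q n) \<and>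
     (\<forall>q. \<exists>z\<in>topspace T. q \<in> base_branches V z T)"

end

theory Submission imports Defs begin

lemma restr_eq: "restr p n = restr q n \<longleftrightarrow> (\<forall>i<n. p i = q i)"
  unfolding restr_def by (auto simp: map_eq_conv)

lemma SBall_mono: "m \<le> k \<Longrightarrow> SBall w k \<subseteq> SBall w m"
  unfolding SBall_def by auto

lemma SBall_inner:
  assumes "w \<in> SBall p m" shows "\<exists>k. SBall w k \<subseteq> SBall p m"
proof (cases "w = p")
  case True then show ?thesis by blast
next
  case False
  with assms obtain n where w: "\<forall>i<m. w i = p i" "\<forall>i<n. p i = w i" "p n < w n"
    unfolding SBall_def seq_less_def by auto
  have "n \<ge> m" using w by (metis leI less_irrefl)
  have "SBall w (Suc n) \<subseteq> SBall p m"
  proof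
    fix r assume "r \<in> SBall w (Suc n)"
    hence r: "\<forall>i<Suc n. r i = w i" unfolding SBall_def seq_less_def by auto
    hence "\<forall>i<n. p i = r i" "p n < r n" using w by auto
    moreover have "\<forall>i<m. r i = p i" using r w \<open>n \<ge> m\<close> by auto
    ultimately show "r \<in> SBall p m" unfolding SBall_def seq_less_def by auto
  qed
  then show ?thesis by blast
qed

lemma SBall_self: "w \<in> SBall w m" unfolding SBall_def by auto

lemma openin_sigmaS: "openin sigmaS W \<longleftrightarrow> (\<forall>w\<in>W. \<exists>m. SBall w m \<subseteq> W)"
proof
  assume "openin sigmaS W"
  hence "generate_topology_on (range (\<lambda>(p, m). SBall p m)) W"
    unfolding sigmaS_def openin_topology_generated_by_iff .
  then show "\<forall>w\<in>W. \<exists>m. SBall w m \<subseteq> W"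
  proof induction
    case Empty then show ?case by simp
  next
    case (Int a b)
    show ?case
    proof
      fix w assume "w \<in> a \<inter> b"
      then obtain m1 m2 where "SBall w m1 \<subseteq> a" "SBall w m2 \<subseteq> b" using Int by blast
      then have "SBall w (max m1 m2) \<subseteq> a \<inter> b"
        using SBall_mono[of m1 "max m1 m2" w] SBall_mono[of m2 "max m1 m2" w] by auto
      then show "\<exists>m. SBall w m \<subseteq> a \<inter> b" by blast
    qed
  next
    case (UN K) then show ?case by blast
  next
    case (Basis s)
    then obtain p m where "s = SBall p m" by auto
    then show ?case using SBall_inner by blast
  qed
next
  assume H: "\<forall>w\<in>W. \<exists>m. SBall w m \<subseteq> W"
  then obtain mm where mm: "\<And>w. w \<in> W \<Longrightarrow> SBall w (mm w) \<subseteq> W" by metis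
  have eq: "W = (\<Union>w\<in>W. SBall w (mm w))"
    using mm SBall_self by blast
  have "generate_topology_on (range (\<lambda>(p, m). SBall p m)) (\<Union>((\<lambda>w. SBall w (mm w)) ` W))"
  proof (rule generate_topology_on.UN)
    fix k assume "k \<in> (\<lambda>w. SBall w (mm w)) ` W"
    then obtain w where "k = SBall w (mm w)" by blast
    then have "k \<in> range (\<lambda>(p, m). SBall p m)" by (auto intro!: image_eqI[where x="(w, mm w)"])
    then show "generate_topology_on (range (\<lambda>(p, m). SBall p m)) k"
      by (rule generate_topology_on.Basis)
  qed
  then show "openin sigmaS W"
    unfolding sigmaS_def openin_topology_generated_by_iff using eq by simp
qed

lemma topspace_sigmaS: "topspace sigmaS = UNIV"
proof -
  have "openin sigmaS UNIV" unfolding openin_sigmaS by simp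
  then show ?thesis using openin_subset by blast
qed

lemma openin_SBall: "openin sigmaS (SBall p m)"
  unfolding openin_sigmaS using SBall_inner by blast


lemma sb_facts:
  assumes "sorgenfrey_base Y V"
  shows "complete_scheme V" "covering Y V"
    "\<And>x q n. x \<in> topspace Y \<Longrightarrow> q \<in> branches V x \<Longrightarrow> \<exists>t\<in>base_branches V x Y. restr t n = restr q n"
    "\<And>q. \<exists>z\<in>topspace Y. q \<in> base_branches V z Y"
  using assms unfolding sorgenfrey_base_def by blast+

definition FF :: "'a topology \<Rightarrow> 'a souslin \<Rightarrow> (nat \<Rightarrow> nat) \<Rightarrow> 'a" where
  "FF Y V q = (SOME z. z \<in> topspace Y \<and> q \<in> base_branches V z Y)"

lemma rseq_iff: "p \<in> rsequences q m \<longleftrightarrow> seq_less q p \<and> (\<forall>i<m. p i = q i)"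
  unfolding rsequences_def restr_eq by auto

lemma cut_anti: assumes "m \<le> m'" shows "cut V q m' \<subseteq> cut V q m"
proof
  fix x assume "x \<in> cut V q m'"
  then obtain p where "p \<in> rsequences q m'" "x \<in> fruit V p" unfolding cut_def by blast
  moreover then have "p \<in> rsequences q m" using assms unfolding rseq_iff by auto
  ultimately show "x \<in> cut V q m" unfolding cut_def by blast
qed

lemma cut_nonempty: assumes "complete_scheme V" shows "cut V q m \<noteq> {}"
proof -
  let ?p = "q(m := Suc (q m))"
  have "?p \<in> rsequences q m" unfolding rseq_iff seq_less_def by auto
  moreover have "fruit V ?p \<noteq> {}" using assms unfolding complete_scheme_def by blast
  ultimately show ?thesis unfolding cut_def by blast
qed

lemma BB_unique:
  assumes H: "Hausdorff_space Y" and c: "complete_scheme V"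
    and z: "z \<in> topspace Y" "q \<in> base_branches V z Y"
    and z': "z' \<in> topspace Y" "q \<in> base_branches V z' Y"
  shows "z = z'"
proof (rule ccontr)
  assume "z \<noteq> z'"
  then obtain U U' where U: "openin Y U" "openin Y U'" "z \<in> U" "z' \<in> U'" "disjnt U U'"
    using H z(1) z'(1) unfolding Hausdorff_space_def by blast
  obtain m where m: "cut V q m \<union> {z} \<subseteq> U" using z(2) U(1,3) unfolding base_branches_def by blast
  obtain m' where m': "cut V q m' \<union> {z'} \<subseteq> U'" using z'(2) U(2,4) unfolding base_branches_def by blast
  have "cut V q (max m m') \<subseteq> U \<inter> U'"
    using cut_anti[of m "max m m'" V q] cut_anti[of m' "max m m'" V q] m m' by auto
  moreover have "U \<inter> U' = {}" using U(5) by (simp add: disjnt_def)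
  ultimately show False using cut_nonempty[OF c, of q "max m m'"] by blast
qed

lemma FF_prop:
  assumes "sorgenfrey_base Y V"
  shows "FF Y V q \<in> topspace Y \<and> q \<in> base_branches V (FF Y V q) Y"
proof -
  have "\<exists>z. z \<in> topspace Y \<and> q \<in> base_branches V z Y"
    using sb_facts(4)[OF assms] by blast
  then show ?thesis unfolding FF_def by (rule someI_ex)
qed

lemma FF_eq:
  assumes "sorgenfrey_base Y V" "Hausdorff_space Y" "z \<in> topspace Y" "q \<in> base_branches V z Y"
  shows "FF Y V q = z"
  using BB_unique[OF assms(2) sb_facts(1)[OF assms(1)] _ _ assms(3,4)] FF_prop[OF assms(1), of q]
  by blast

lemma SBall_rseq: "SBall q m = {q} \<union> rsequences q m"
  unfolding SBall_def by (auto simp: rseq_iff)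

lemma fruit_topspace:
  assumes "sorgenfrey_base Y V" "y \<in> fruit V p" shows "y \<in> topspace Y"
proof -
  have "y \<in> V (restr p 0)" using assms(2) unfolding fruit_def by blast
  moreover have "V [] = topspace Y" using sb_facts(2)[OF assms(1)] unfolding covering_def by blast
  ultimately show ?thesis unfolding restr_def by simp
qed

lemma FF_image:
  assumes sb: "sorgenfrey_base Y V" and H: "Hausdorff_space Y"
  shows "FF Y V ` SBall q m = cut V q m \<union> {FF Y V q}"
proof
  show "FF Y V ` SBall q m \<subseteq> cut V q m \<union> {FF Y V q}"
  proof
    fix y assume "y \<in> FF Y V ` SBall q m"
    then obtain r where r: "r \<in> SBall q m" "y = FF Y V r" by blast
    show "y \<in> cut V q m \<union> {FF Y V q}"
    proof (cases "r = q")
      case True then show ?thesis using r by simp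
    next
      case False
      then have "r \<in> rsequences q m" using r SBall_rseq by auto
      moreover have "y \<in> fruit V r" using FF_prop[OF sb, of r] r
        unfolding base_branches_def branches_def by auto
      ultimately show ?thesis unfolding cut_def by blast
    qed
  qed
next
  show "cut V q m \<union> {FF Y V q} \<subseteq> FF Y V ` SBall q m"
  proof
    fix y assume y: "y \<in> cut V q m \<union> {FF Y V q}"
    show "y \<in> FF Y V ` SBall q m"
    proof (cases "y = FF Y V q")
      case True then show ?thesis using SBall_self by blast
    next
      case False
      then obtain p where p: "p \<in> rsequences q m" "y \<in> fruit V p" using y unfolding cut_def by blast
      have yt: "y \<in> topspace Y" using fruit_topspace[OF sb p(2)] .
      have pb: "p \<in> branches V y" using p unfolding branches_def by simp
      obtain d where d: "\<forall>i<d. q i = p i" "q d < p d" and pm: "\<forall>i<m. p i = q i"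
        using p(1) unfolding rseq_iff seq_less_def by auto
      have "m \<le> d"
      proof (rule ccontr)
        assume "\<not> m \<le> d"
        then have "p d = q d" using pm by simp
        then show False using d(2) by simp
      qed
      obtain t where t: "t \<in> base_branches V y Y" "restr t (Suc d) = restr p (Suc d)"
        using sb_facts(3)[OF sb yt pb] by blast
      have tp: "\<forall>i<Suc d. t i = p i" using t(2) unfolding restr_eq .
      have t1: "\<forall>i<d. q i = t i" using tp d(1) by simp
      have t2: "q d < t d" using tp d(2) by simp
      have t3: "\<forall>i<m. t i = q i" using tp pm \<open>m \<le> d\<close> by simp
      have "seq_less q t" unfolding seq_less_def using t1 t2 by blast
      then have "t \<in> rsequences q m" unfolding rseq_iff using t3 by blast
      then have tS: "t \<in> SBall q m" unfolding SBall_rseq by blast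
      have Ft: "FF Y V t = y" using FF_eq[OF sb H yt t(1)] .
      show ?thesis using tS Ft by blast
    qed
  qed
qed

lemma FF_cont:
  assumes sb: "sorgenfrey_base Y V" and H: "Hausdorff_space Y"
  shows "continuous_map sigmaS Y (FF Y V)"
  unfolding continuous_map_def
proof (intro conjI allI impI)
  show "FF Y V \<in> topspace sigmaS \<rightarrow> topspace Y" using FF_prop[OF sb] by blast
  fix U assume U: "openin Y U"
  show "openin sigmaS {x \<in> topspace sigmaS. FF Y V x \<in> U}"
    unfolding openin_sigmaS
  proof
    fix w assume "w \<in> {x \<in> topspace sigmaS. FF Y V x \<in> U}"
    then have wU: "FF Y V w \<in> U" by simp
    obtain m where "cut V w m \<union> {FF Y V w} \<subseteq> U"
      using FF_prop[OF sb, of w] U wU unfolding base_branches_def by blast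
    then have "FF Y V ` SBall w m \<subseteq> U" using FF_image[OF sb H] by simp
    then have "SBall w m \<subseteq> {x \<in> topspace sigmaS. FF Y V x \<in> U}"
      unfolding image_subset_iff topspace_sigmaS by blast
    then show "\<exists>m. SBall w m \<subseteq> {x \<in> topspace sigmaS. FF Y V x \<in> U}" by blast
  qed
qed

lemma FF_open:
  assumes sb: "sorgenfrey_base Y V" and H: "Hausdorff_space Y"
  shows "open_map sigmaS Y (FF Y V)"
  unfolding open_map_def
proof (intro allI impI)
  fix W assume "openin sigmaS W"
  then obtain mm where mm: "\<And>w. w \<in> W \<Longrightarrow> SBall w (mm w) \<subseteq> W"
    unfolding openin_sigmaS by metis
  have eq: "FF Y V ` W = (\<Union>w\<in>W. FF Y V ` SBall w (mm w))"
    using mm SBall_self by blast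
  have "openin Y (FF Y V ` SBall w (mm w))" for w
    using FF_image[OF sb H] FF_prop[OF sb, of w] unfolding base_branches_def by simp
  then show "openin Y (FF Y V ` W)" unfolding eq by (intro openin_Union) blast
qed

lemma branch_exists:
  assumes sb: "sorgenfrey_base Y V" and y: "y \<in> topspace Y"
  shows "\<exists>q. q \<in> branches V y"
proof -
  have cov: "\<And>a. V a = (\<Union>n. V (a @ [n]))" "V [] = topspace Y"
    using sb_facts(2)[OF sb] unfolding covering_def by blast+
  define g where "g a = (SOME k. y \<in> V (a @ [k]))" for a
  have g: "y \<in> V a \<Longrightarrow> y \<in> V (a @ [g a])" for a
  proof -
    assume "y \<in> V a"
    then have "y \<in> (\<Union>n. V (a @ [n]))" using cov(1)[of a] by blast
    then have "\<exists>k. y \<in> V (a @ [k])" by blast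
    then show ?thesis unfolding g_def by (rule someI_ex)
  qed
  define lst where "lst n = rec_nat [] (\<lambda>_ l. l @ [g l]) n" for n
  have lst0: "lst 0 = []" and lstS: "lst (Suc n) = lst n @ [g (lst n)]" for n
    unfolding lst_def by simp_all
  define q where "q n = g (lst n)" for n
  have rq: "restr q n = lst n" for n
    by (induction n) (simp_all add: restr_def lst0 lstS q_def)
  have "y \<in> V (lst n)" for n
    by (induction n) (simp_all add: lst0 lstS cov(2) y g)
  then have "q \<in> branches V y" unfolding branches_def fruit_def by (simp add: rq)
  then show ?thesis by blast
qed

lemma FF_surj:
  assumes sb: "sorgenfrey_base Y V" and H: "Hausdorff_space Y"
  shows "FF Y V ` topspace sigmaS = topspace Y"
proof
  show "FF Y V ` topspace sigmaS \<subseteq> topspace Y" using FF_prop[OF sb] by auto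
  show "topspace Y \<subseteq> FF Y V ` topspace sigmaS"
  proof
    fix y assume y: "y \<in> topspace Y"
    obtain q where "q \<in> branches V y" using branch_exists[OF sb y] by blast
    then obtain t where "t \<in> base_branches V y Y"
      using sb_facts(3)[OF sb y] by blast
    then have "FF Y V t = y" using FF_eq[OF sb H y] by simp
    then show "y \<in> FF Y V ` topspace sigmaS" by (auto simp: topspace_sigmaS)
  qed
qed

lemma fruit_disjoint:
  assumes ls: "locally_strict V" and ne: "p \<noteq> q"
  shows "fruit V p \<inter> fruit V q = {}"
proof -
  obtain d where "p d \<noteq> q d" using ne by auto
  define n where "n = (LEAST d. p d \<noteq> q d)"
  have n1: "p n \<noteq> q n" unfolding n_def by (rule LeastI[of "\<lambda>d. p d \<noteq> q d", OF \<open>p d \<noteq> q d\<close>])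
  have n2: "\<forall>i<n. p i = q i" unfolding n_def using not_less_Least by blast
  note n = n1 n2
  have rp: "restr p (Suc n) = restr p n @ [p n]" "restr q (Suc n) = restr q n @ [q n]"
    by (simp_all add: restr_def)
  have "restr q n = restr p n" using n(2) unfolding restr_eq by simp
  then have rq: "restr q (Suc n) = restr p n @ [q n]" using rp(2) by simp
  have ls2: "m \<noteq> k \<Longrightarrow> V (a @ [m]) \<inter> V (a @ [k]) = {}" for a m k
    using conjunct2[OF spec[OF ls[unfolded locally_strict_def], of a]] by simp
  have "V (restr p n @ [p n]) \<inter> V (restr p n @ [q n]) = {}"
    using ls2 n(1) by blast
  then have "V (restr p (Suc n)) \<inter> V (restr q (Suc n)) = {}"
    using rp(1) rq by simp
  moreover have "fruit V p \<subseteq> V (restr p (Suc n))" "fruit V q \<subseteq> V (restr q (Suc n))"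
    unfolding fruit_def by (rule INT_lower, rule UNIV_I)+
  ultimately show ?thesis by blast
qed

lemma FF_fruit:
  assumes sb: "sorgenfrey_base Y V" shows "FF Y V q \<in> fruit V q"
proof -
  have "q \<in> base_branches V (FF Y V q) Y" using FF_prop[OF sb] by blast
  then have "q \<in> branches V (FF Y V q)" unfolding base_branches_def by blast
  then show ?thesis unfolding branches_def by blast
qed

lemma FF_inj:
  assumes sb: "sorgenfrey_base Y V" and ls: "locally_strict V"
  shows "inj_on (FF Y V) A"
proof (rule inj_onI)
  fix p q assume "p \<in> A" "q \<in> A" and eq: "FF Y V p = FF Y V q"
  have "FF Y V p \<in> fruit V p \<inter> fruit V q"
    using FF_fruit[OF sb, of p] FF_fruit[OF sb, of q] eq by simp
  then show "p = q" using fruit_disjoint[OF ls, of p q] by blast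
qed

theorem mainTheorem8:
  fixes Y :: "'a topology"
  assumes "Hausdorff_space Y"
    and "\<exists>V. sorgenfrey_base Y V"
  shows "(\<exists>f. continuous_map sigmaS Y f \<and> open_map sigmaS Y f \<and> f ` topspace sigmaS = topspace Y)
    \<and> ((\<exists>V. sorgenfrey_base Y V \<and> locally_strict V \<and> strict_branches V)
         \<longrightarrow> sigmaS homeomorphic_space Y)"
proof
  obtain V where sb: "sorgenfrey_base Y V" using assms(2) by blast
  show "\<exists>f. continuous_map sigmaS Y f \<and> open_map sigmaS Y f \<and> f ` topspace sigmaS = topspace Y"
    using FF_cont[OF sb assms(1)] FF_open[OF sb assms(1)] FF_surj[OF sb assms(1)] by blast
next
  show "(\<exists>V. sorgenfrey_base Y V \<and> locally_strict V \<and> strict_branches V)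
         \<longrightarrow> sigmaS homeomorphic_space Y"
  proof
    assume "\<exists>V. sorgenfrey_base Y V \<and> locally_strict V \<and> strict_branches V"
    then obtain V where sb: "sorgenfrey_base Y V" and ls: "locally_strict V" by blast
    have "homeomorphic_map sigmaS Y (FF Y V)"
      by (rule bijective_open_imp_homeomorphic_map[OF FF_cont[OF sb assms(1)]
            FF_open[OF sb assms(1)] FF_surj[OF sb assms(1)] FF_inj[OF sb ls]])
    then show "sigmaS homeomorphic_space Y" unfolding homeomorphic_space by blast
  qed
qed

end
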